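(* Let $\mathcal{D}$ be a set, $\Sigma$ a finite set, $R\subseteq\mathcal{D}^\Sigma$ and $k\ge0$ an integer. Then $R$ admits a $k$-key if and only if $|R|\le|\mathcal{D}|^k$ (cardinal arithmetic when $\mathcal{D}$ is infinite).
   Context: For $R\subseteq\mathcal{D}^\Sigma$ and $\Lambda\subseteq\Sigma$, $\pi_\Lambda R=\{a|_\Lambda:a\in R\}$. For a relation $S\subseteq\mathcal{D}^{\Omega}$, a proper subset $\textup{K}\subset\Omega$ is a $k$-key of $S$ if $|\textup{K}|=k$ and for all $a,b\in S$, $a|_{\textup{K}}=b|_{\textup{K}}$ implies $a=b$. $R\subseteq\mathcal{D}^\Sigma$ admits a $k$-key if there exist a finite set $\textup{T}$ with $\textup{T}\cap\Sigma=\emptyset$ and $\widehat R\subseteq\mathcal{D}^{\textup{T}\cup\Sigma}$ having a $k$-key such that $R=\pi_\Sigma\widehat R$. *)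

theory Defs
  imports Main "HOL-Library.FuncSet" "HOL-Library.Equipollence"
begin

text \<open>Tuples over a finite attribute set Omega with values in D are the
  extensional functions in PiE Omega (\<lambda>_. D), i.e. elements of D^Omega.\<close>

definition proj :: "'v set \<Rightarrow> ('v \<Rightarrow> 'd) set \<Rightarrow> ('v \<Rightarrow> 'd) set" where
  "proj L R = (\<lambda>a. restrict a L) ` R"

definition is_key :: "nat \<Rightarrow> 'v set \<Rightarrow> 'v set \<Rightarrow> ('v \<Rightarrow> 'd) set \<Rightarrow> bool" where
  "is_key k K Omega S \<longleftrightarrow> K \<subset> Omega \<and> card K = k \<and>
     (\<forall>a\<in>S. \<forall>b\<in>S. restrict a K = restrict b K \<longrightarrow> a = b)"

definition has_key :: "nat \<Rightarrow> 'v set \<Rightarrow> ('v \<Rightarrow> 'd) set \<Rightarrow> bool" where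
  "has_key k Omega S \<longleftrightarrow> (\<exists>K. is_key k K Omega S)"

text \<open>R \<subseteq> D^Sg admits a k-key: there is a finite set T of fresh attributes
  (tagged Inr, hence disjoint from the attributes Inl ` Sg) and a relation
  Rhat \<subseteq> D^(T \<union> Sg) having a k-key whose projection onto Sg is R.\<close>
definition admits_key :: "'d set \<Rightarrow> 'v set \<Rightarrow> nat \<Rightarrow> ('v \<Rightarrow> 'd) set \<Rightarrow> bool" where
  "admits_key D Sg k R \<longleftrightarrow>
     (\<exists>(T :: nat set) (Rhat :: ('v + nat \<Rightarrow> 'd) set).
        finite T \<and>
        Rhat \<subseteq> PiE (Inr ` T \<union> Inl ` Sg) (\<lambda>_. D) \<and>
        has_key k (Inr ` T \<union> Inl ` Sg) Rhat \<and>
        R = (\<lambda>a. restrict (a \<circ> Inl) Sg) ` Rhat)"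

end

theory Submission
  imports Defs
begin

theorem lemma20:
  fixes D :: "'d set" and Sg :: "'v set" and R :: "('v \<Rightarrow> 'd) set" and k :: nat
  assumes "D \<noteq> {}"
    and "finite Sg"
    and "R \<subseteq> PiE Sg (\<lambda>_. D)"
  shows "admits_key D Sg k R \<longleftrightarrow> R \<lesssim> PiE {..<k} (\<lambda>_. D)"
proof
  assume "admits_key D Sg k R"
  then obtain T :: "nat set" and Rhat where T: "finite T"
    and Rs: "Rhat \<subseteq> PiE (Inr ` T \<union> Inl ` Sg) (\<lambda>_. D)"
    and hk: "has_key k (Inr ` T \<union> Inl ` Sg) Rhat"
    and R: "R = (\<lambda>a. restrict (a \<circ> Inl) Sg) ` Rhat"
    unfolding admits_key_def by (elim exE conjE) blast
  from hk obtain K where K: "is_key k K (Inr ` T \<union> Inl ` Sg) Rhat"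
    unfolding has_key_def by (elim exE) blast
  have KO: "K \<subseteq> Inr ` T \<union> Inl ` Sg" and ck: "card K = k"
    and inj: "\<forall>a\<in>Rhat. \<forall>b\<in>Rhat. restrict a K = restrict b K \<longrightarrow> a = b"
    using K unfolding is_key_def by (auto dest: psubset_imp_subset)
  have fK: "finite K" using KO T assms(2) by (meson finite_Un finite_imageI finite_subset finite_lessThan)
  have "R \<lesssim> Rhat" unfolding R by (rule image_lepoll)
  also have "Rhat \<lesssim> PiE K (\<lambda>_. D)"
    unfolding lepoll_def
  proof (intro exI conjI)
    show "inj_on (\<lambda>a. restrict a K) Rhat" using inj unfolding inj_on_def by blast
    show "(\<lambda>a. restrict a K) ` Rhat \<subseteq> PiE K (\<lambda>_. D)"
    proof (rule image_subsetI)
      fix a assume "a \<in> Rhat"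
      then have "a \<in> PiE (Inr ` T \<union> Inl ` Sg) (\<lambda>_. D)" using Rs by blast
      then show "restrict a K \<in> PiE K (\<lambda>_. D)" using KO
        by (metis PiE_mem restrict_PiE_iff subsetD)
    qed
  qed
  also have "PiE K (\<lambda>_. D) \<lesssim> PiE {..<k} (\<lambda>_. D)"
    apply (rule lepoll_funcset_left[OF assms(1)])
    using fK ck by (simp add: eqpoll_iff_finite_card eqpoll_imp_lepoll)
  finally show "R \<lesssim> PiE {..<k} (\<lambda>_. D)" .
next
  assume "R \<lesssim> PiE {..<k} (\<lambda>_. D)"
  then obtain f where finj: "inj_on f R" and fim: "f ` R \<subseteq> PiE {..<k} (\<lambda>_. D)"
    unfolding lepoll_def by blast
  obtain d where d: "d \<in> D" using assms(1) by blast
  define \<Omega> where "\<Omega> = Inr ` {..k} \<union> Inl ` Sg"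
  define g where "g a = restrict (\<lambda>x. case x of Inl s \<Rightarrow> a s | Inr i \<Rightarrow> (if i < k then f a i else d)) \<Omega>" for a
  define K :: "('v + nat) set" where "K = Inr ` {..<k}"
  have gR: "g ` R \<subseteq> PiE \<Omega> (\<lambda>_. D)"
  proof
    fix y assume "y \<in> g ` R"
    then obtain a where a: "a \<in> R" and y: "y = g a" by blast
    have "a \<in> PiE Sg (\<lambda>_. D)" using a assms(3) by blast
    moreover have "f a \<in> PiE {..<k} (\<lambda>_. D)" using a fim by blast
    ultimately show "y \<in> PiE \<Omega> (\<lambda>_. D)"
      unfolding y g_def \<Omega>_def using d by (auto simp: PiE_iff split: sum.splits)
  qed
  have key: "is_key k K \<Omega> (g ` R)"
    unfolding is_key_def
  proof (intro conjI ballI impI)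
    show "K \<subset> \<Omega>"
    proof
      show "K \<subseteq> \<Omega>" unfolding K_def \<Omega>_def by auto
      have "Inr k \<in> \<Omega>" "Inr k \<notin> K" unfolding K_def \<Omega>_def by auto
      then show "K \<noteq> \<Omega>" by blast
    qed
    show "card K = k" unfolding K_def by (simp add: card_image)
    fix y z assume y: "y \<in> g ` R" and z: "z \<in> g ` R" and eq: "restrict y K = restrict z K"
    then obtain a b where a: "a \<in> R" "y = g a" and b: "b \<in> R" "z = g b" by blast
    have "f a = f b"
    proof (rule PiE_ext)
      show "f a \<in> PiE {..<k} (\<lambda>_. D)" "f b \<in> PiE {..<k} (\<lambda>_. D)" using a b fim by auto
      fix i assume i: "i \<in> {..<k}"
      have "restrict y K (Inr i) = restrict z K (Inr i)" using eq by simp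
      then show "f a i = f b i" using i a b unfolding g_def K_def \<Omega>_def by auto
    qed
    then have "a = b" using finj a b unfolding inj_on_def by blast
    then show "y = z" using a b by simp
  qed
  have proj: "R = (\<lambda>a. restrict (a \<circ> Inl) Sg) ` g ` R"
  proof -
    have "restrict (g a \<circ> Inl) Sg = a" if a: "a \<in> R" for a
    proof -
      have "a \<in> PiE Sg (\<lambda>_. D)" using a assms(3) by blast
      then show ?thesis unfolding g_def \<Omega>_def
        by (auto simp: fun_eq_iff PiE_iff extensional_def)
    qed
    then show ?thesis by (simp add: image_image)
  qed
  show "admits_key D Sg k R"
    unfolding admits_key_def has_key_def
    apply (rule exI[of _ "{..k}"], rule exI[of _ "g ` R"])
    using gR key proj unfolding \<Omega>_def by auto
qed

end
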